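(* Let $d\ge1$, let $\mathbf{p}=(p_1,\dots,p_d)$ be a vector of nonzero real numbers and let $\boldsymbol\pi=(\pi_2,\dots,\pi_d)$ with each $\pi_i$ a permutation of $\{0,\dots,i-1\}$. Then every simplex $L\in\mathcal{T}_d(\mathbf{p},\boldsymbol\pi)$ satisfies $$\operatorname{meas}_d L=\prod_{i=1}^d|p_i|.$$
   Context: Construction of $\mathcal{T}_d(\mathbf{p},\boldsymbol\pi)$: inductively for $m=1,\dots,d$ define a collection $\mathcal{T}_m$ of $m$-simplices in $\mathbb{R}^m$ with a vertex coloring $c_m$ with colors in $\{0,\dots,m\}$. For $m=1$: vertices $A_z=zp_1$ ($z\in\mathbb{Z}$), simplices the segments between $zp_1$ and $(z+1)p_1$, $c_1(A_z)=z\bmod 2$. For $2\le m\le d$: put $c'=\pi_m\circ c_{m-1}$; for each $K\in\mathcal{T}_{m-1}$ label its vertices $A_0,\dots,A_{m-1}$ so that $c'(A_i)=i$, set $B^K_j=(A_{j\bmod m},jp_m)\in\mathbb{R}^m$ for $j\in\mathbb{Z}$, and $L^{K,z}=\operatorname{conv}\{B^K_z,\dots,B^K_{z+m}\}$ for $z\in\mathbb{Z}$; $\mathcal{T}_m=\{L^{K,z}\}$, with vertices $(A,jp_m)$ ($A$ a vertex of $\mathcal{T}_{m-1}$, $j\equiv c'(A)\pmod m$) colored $c_m((A,jp_m))=j\bmod(m+1)$. Then $\mathcal{T}_d(\mathbf{p},\boldsymbol\pi)=\mathcal{T}_d$. $\operatorname{meas}_d$ is $d$-dimensional Lebesgue measure.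 *)

theory Defs
  imports "HOL-Analysis.Analysis"
begin

text \<open>Points of R^m are represented as real lists of length m; a point (A, x) of
R^m = R^(m-1) x R is the list A @ [x].  Parameters: p :: nat => real gives p_1..p_d
(index i = p i); pm :: nat => nat => nat gives pi_2..pi_d (pm i = pi_i).\<close>

definition lconv :: "nat \<Rightarrow> real list list \<Rightarrow> real list set" where
  "lconv m vs = {map (\<lambda>k. \<Sum>i<length vs. t i * (vs ! i) ! k) [0..<m] | t.
                   (\<forall>i<length vs. 0 \<le> t i) \<and> (\<Sum>i<length vs. t i) = 1}"

definition meas :: "nat \<Rightarrow> real list set \<Rightarrow> real" where
  "meas d S = measure (PiM {..<d} (\<lambda>_. lborel)) ((\<lambda>xs. \<lambda>i\<in>{..<d}. xs ! i) ` S)"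

definition col :: "(nat \<Rightarrow> real) \<Rightarrow> nat \<Rightarrow> real list \<Rightarrow> nat" where
  "col p m v = nat ((THE j::int. v ! (m - 1) = of_int j * p m) mod (int m + 1))"

definition Avert :: "(nat \<Rightarrow> real) \<Rightarrow> (nat \<Rightarrow> nat \<Rightarrow> nat) \<Rightarrow> nat \<Rightarrow> real list list \<Rightarrow> nat \<Rightarrow> real list" where
  "Avert p pm m K i = (THE A. A \<in> set K \<and> pm m (col p (m - 1) A) = i)"

definition Bvert :: "(nat \<Rightarrow> real) \<Rightarrow> (nat \<Rightarrow> nat \<Rightarrow> nat) \<Rightarrow> nat \<Rightarrow> real list list \<Rightarrow> int \<Rightarrow> real list" where
  "Bvert p pm m K j = Avert p pm m K (nat (j mod int m)) @ [of_int j * p m]"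

fun Tv :: "(nat \<Rightarrow> real) \<Rightarrow> (nat \<Rightarrow> nat \<Rightarrow> nat) \<Rightarrow> nat \<Rightarrow> real list list set" where
  "Tv p pm 0 = {}"
| "Tv p pm (Suc 0) = {[[of_int z * p 1], [of_int (z + 1) * p 1]] | z::int. True}"
| "Tv p pm (Suc (Suc k)) =
     {map (\<lambda>i. Bvert p pm (Suc (Suc k)) K (z + int i)) [0..<Suc (Suc (Suc k))] | K z.
        K \<in> Tv p pm (Suc k)}"

definition Tri :: "(nat \<Rightarrow> real) \<Rightarrow> (nat \<Rightarrow> nat \<Rightarrow> nat) \<Rightarrow> nat \<Rightarrow> real list set set" where
  "Tri p pm d = lconv d ` Tv p pm d"

end

theory Submission
  imports Defs
begin


abbreviation PM :: "nat \<Rightarrow> (nat \<Rightarrow> real) measure" where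
  "PM n \<equiv> PiM {..<n} (\<lambda>_. (lborel::real measure))"

definition aff :: "nat \<Rightarrow> ((nat \<Rightarrow> real) \<Rightarrow> real) \<Rightarrow> bool" where
  "aff n f \<longleftrightarrow> (\<exists>a b. \<forall>x. f x = a + (\<Sum>j<n. b j * x j))"

definition bary :: "nat \<Rightarrow> (nat \<Rightarrow> nat \<Rightarrow> real) \<Rightarrow> (nat \<Rightarrow> (nat \<Rightarrow> real) \<Rightarrow> real) \<Rightarrow> bool" where
  "bary n V \<beta> \<longleftrightarrow> (\<forall>k\<le>n. aff n (\<beta> k)) \<and> (\<forall>x. (\<Sum>k\<le>n. \<beta> k x) = 1)
     \<and> (\<forall>x j. j < n \<longrightarrow> (\<Sum>k\<le>n. \<beta> k x * V k j) = x j)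
     \<and> (\<forall>k\<le>n. \<forall>l\<le>n. \<beta> k (V l) = (if k = l then 1 else 0))"

definition shull :: "nat \<Rightarrow> (nat \<Rightarrow> nat \<Rightarrow> real) \<Rightarrow> (nat \<Rightarrow> real) set" where
  "shull n V = {restrict (\<lambda>j. \<Sum>k\<le>n. t k * V k j) {..<n} | t. (\<forall>k\<le>n. 0 \<le> t k) \<and> (\<Sum>k\<le>n. t k) = 1}"

lemma aff_local: "aff n f \<Longrightarrow> (\<And>j. j < n \<Longrightarrow> x j = y j) \<Longrightarrow> f x = f y"
  unfolding aff_def by auto

lemma aff_const: "aff n (\<lambda>_. c)"
  unfolding aff_def by (rule exI[of _ c], rule exI[of _ "\<lambda>_. 0"]) simp

lemma aff_coord: "j < n \<Longrightarrow> aff n (\<lambda>x. x j)"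
  unfolding aff_def
  by (rule exI[of _ 0], rule exI[of _ "\<lambda>i. if i = j then 1 else 0"]) (auto simp: if_distrib[of "\<lambda>c. c * _"] cong: if_cong)

lemma aff_add: "aff n f \<Longrightarrow> aff n g \<Longrightarrow> aff n (\<lambda>x. f x + g x)"
  unfolding aff_def
proof (elim exE)
  fix a b a' b' assume "\<forall>x. f x = a + (\<Sum>j<n. b j * x j)" "\<forall>x. g x = a' + (\<Sum>j<n. b' j * x j)"
  then show "\<exists>a b. \<forall>x. f x + g x = a + (\<Sum>j<n. b j * x j)"
    by (intro exI[of _ "a+a'"] exI[of _ "\<lambda>j. b j + b' j"]) (simp add: algebra_simps sum.distrib)
qed

lemma aff_mult: "aff n f \<Longrightarrow> aff n (\<lambda>x. c * f x)"
  unfolding aff_def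
proof (elim exE)
  fix a b assume "\<forall>x. f x = a + (\<Sum>j<n. b j * x j)"
  then show "\<exists>a b. \<forall>x. c * f x = a + (\<Sum>j<n. b j * x j)"
    by (intro exI[of _ "c*a"] exI[of _ "\<lambda>j. c * b j"]) (simp add: algebra_simps sum_distrib_left)
qed

lemma aff_diff: "aff n f \<Longrightarrow> aff n g \<Longrightarrow> aff n (\<lambda>x. f x - g x)"
  using aff_add[of n f "\<lambda>x. (-1) * g x"] aff_mult[of n g "-1"] by simp

lemma aff_sum: "finite S \<Longrightarrow> (\<And>i. i \<in> S \<Longrightarrow> aff n (f i)) \<Longrightarrow> aff n (\<lambda>x. \<Sum>i\<in>S. f i x)"
  by (induction S rule: finite_induct) (auto intro: aff_add aff_const)

lemma aff_mono: "aff n f \<Longrightarrow> n \<le> m \<Longrightarrow> aff m f"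
  unfolding aff_def
proof (elim exE)
  fix a b assume *: "\<forall>x. f x = a + (\<Sum>j<n. b j * x j)" and "n \<le> m"
  show "\<exists>a b. \<forall>x. f x = a + (\<Sum>j<m. b j * x j)"
  proof (intro exI allI)
    fix x
    have "(\<Sum>j<m. (if j < n then b j else 0) * x j) = (\<Sum>j<n. b j * x j)"
      using \<open>n \<le> m\<close> by (intro sum.mono_neutral_cong_right) auto
    then show "f x = a + (\<Sum>j<m. (if j < n then b j else 0) * x j)" using * by simp
  qed
qed

lemma aff_comb:
  assumes "aff n f" "(\<Sum>k\<in>S. t k) = 1" "finite S"
    and "\<And>j. j < n \<Longrightarrow> x j = (\<Sum>k\<in>S. t k * V k j)"
  shows "f x = (\<Sum>k\<in>S. t k * f (V k))"
proof -
  obtain a b where ab: "\<And>x. f x = a + (\<Sum>j<n. b j * x j)" using assms(1) unfolding aff_def by blast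
  have "(\<Sum>k\<in>S. t k * f (V k)) = (\<Sum>k\<in>S. t k * a) + (\<Sum>k\<in>S. \<Sum>j<n. t k * (b j * V k j))"
    by (simp add: ab algebra_simps sum.distrib sum_distrib_left)
  also have "\<dots> = a + (\<Sum>j<n. b j * (\<Sum>k\<in>S. t k * V k j))"
  proof -
    have "(\<Sum>k\<in>S. t k * a) = a" using assms(2) by (simp add: sum_distrib_right[symmetric])
    moreover have "(\<Sum>k\<in>S. \<Sum>j<n. t k * (b j * V k j)) = (\<Sum>j<n. b j * (\<Sum>k\<in>S. t k * V k j))"
      by (subst sum.swap) (simp add: sum_distrib_left mult.left_commute)
    ultimately show ?thesis by simp
  qed
  also have "\<dots> = f x" using assms(4) by (simp add: ab)
  finally show ?thesis by simp
qed

lemma aff_meas: "aff n f \<Longrightarrow> n \<le> m \<Longrightarrow> f \<in> borel_measurable (PM m)"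
proof -
  assume "aff n f" "n \<le> m"
  then obtain a b where ab: "\<And>x. f x = a + (\<Sum>j<n. b j * x j)" unfolding aff_def by blast
  have "(\<lambda>x. a + (\<Sum>j<n. b j * x j)) \<in> borel_measurable (PM m)"
    using \<open>n \<le> m\<close> by (intro borel_measurable_add borel_measurable_sum borel_measurable_times measurable_component_singleton) auto
  then show ?thesis using ab by (simp add: fun_eq_iff[symmetric] ab[abs_def])
qed

lemma space_PM: "space (PM n) = PiE {..<n} (\<lambda>_. UNIV)"
  by (simp add: space_PiM)

lemma bary_at_comb:
  assumes "bary n V \<beta>" "k \<le> n" "(\<Sum>l\<le>n. t l) = 1"
    and "\<And>j. j < n \<Longrightarrow> x j = (\<Sum>l\<le>n. t l * V l j)"
  shows "\<beta> k x = t k"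
proof -
  have "\<beta> k x = (\<Sum>l\<le>n. t l * \<beta> k (V l))"
  proof (rule aff_comb[where n=n and f="\<beta> k" and S="{..n}" and t=t and V=V])
    show "aff n (\<beta> k)" using assms(1,2) unfolding bary_def by blast
  qed (use assms(3,4) in auto)
  also have "\<dots> = (\<Sum>l\<le>n. if l = k then t k else 0)"
  proof (rule sum.cong)
    fix l assume "l \<in> {..n}"
    then show "t l * \<beta> k (V l) = (if l = k then t k else 0)"
      using assms(1,2) unfolding bary_def by auto
  qed simp
  also have "\<dots> = t k" using assms(2) by simp
  finally show ?thesis .
qed

lemma shull_eq:
  assumes "bary n V \<beta>"
  shows "shull n V = {x \<in> space (PM n). \<forall>k\<le>n. 0 \<le> \<beta> k x}"
proof (intro equalityI subsetI)
  fix x assume "x \<in> shull n V"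
  then obtain t where t: "\<forall>k\<le>n. 0 \<le> t k" "(\<Sum>k\<le>n. t k) = 1"
    and x: "x = restrict (\<lambda>j. \<Sum>k\<le>n. t k * V k j) {..<n}"
    unfolding shull_def by blast
  have "\<beta> k x = t k" if "k \<le> n" for k
    using assms that t(2) by (rule bary_at_comb) (simp only: x restrict_apply' lessThan_iff)
  then have "\<forall>k\<le>n. 0 \<le> \<beta> k x" using t(1) by simp
  moreover have "x \<in> space (PM n)" unfolding x space_PM by simp
  ultimately show "x \<in> {x \<in> space (PM n). \<forall>k\<le>n. 0 \<le> \<beta> k x}" by blast
next
  fix x assume x: "x \<in> {x \<in> space (PM n). \<forall>k\<le>n. 0 \<le> \<beta> k x}"
  have "x = restrict (\<lambda>j. \<Sum>k\<le>n. \<beta> k x * V k j) {..<n}"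
  proof
    fix j show "x j = restrict (\<lambda>j. \<Sum>k\<le>n. \<beta> k x * V k j) {..<n} j"
    proof (cases "j < n")
      case True
      then show ?thesis using assms unfolding bary_def by simp
    next
      case False
      then show ?thesis using x by (auto simp: space_PM PiE_def extensional_def)
    qed
  qed
  moreover have "(\<Sum>k\<le>n. \<beta> k x) = 1" using assms unfolding bary_def by blast
  ultimately show "x \<in> shull n V"
    using x unfolding shull_def by (intro CollectI exI[of _ "\<lambda>k. \<beta> k x"]) simp
qed

lemma shull_sets:
  assumes "bary n V \<beta>"
  shows "shull n V \<in> sets (PM n)"
proof -
  have "\<forall>k\<le>n. \<beta> k \<in> borel_measurable (PM n)"
  proof (intro allI impI)
    fix k assume "k \<le> n"
    then have "aff n (\<beta> k)" using assms unfolding bary_def by blast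
    then show "\<beta> k \<in> borel_measurable (PM n)" by (rule aff_meas) simp
  qed
  then have "{x \<in> space (PM n). \<forall>k\<in>{..n}. 0 \<le> \<beta> k x} \<in> sets (PM n)"
    by (intro sets.sets_Collect_finite_All borel_measurable_le borel_measurable_const) auto
  moreover have "{x \<in> space (PM n). \<forall>k\<in>{..n}. 0 \<le> \<beta> k x} = shull n V"
    unfolding shull_eq[OF assms] by blast
  ultimately show ?thesis by simp
qed



interpretation PS: product_sigma_finite "\<lambda>_::nat. lborel::real measure"
  by standard

lemma PM_Suc: "PM (Suc n) = PiM (insert n {..<n}) (\<lambda>_. (lborel::real measure))"
  by (simp add: lessThan_Suc)

lemma nn_insert:
  assumes "f \<in> borel_measurable (PM (Suc n))"
  shows "(\<integral>\<^sup>+x. f x \<partial>PM (Suc n)) = (\<integral>\<^sup>+ x. (\<integral>\<^sup>+ y. f (x(n := y)) \<partial>lborel) \<partial>PM n)"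
  using PS.product_nn_integral_insert[of "{..<n}" n f] assms unfolding PM_Suc by simp

lemma meas_H:
  assumes "f \<in> borel_measurable (PM (Suc n))"
  shows "(\<lambda>x. \<integral>\<^sup>+ y. f (x(n := y)) \<partial>lborel) \<in> borel_measurable (PM n)"
  using assms unfolding PM_Suc by measurable

lemma homot:
  fixes f :: "(nat \<Rightarrow> real) \<Rightarrow> ennreal" and c :: real
  assumes "0 < c" "f \<in> borel_measurable (PM n)"
  shows "(\<integral>\<^sup>+x. f (restrict (\<lambda>j. a j + c * x j) {..<n}) \<partial>PM n) = ennreal (1 / c^n) * (\<integral>\<^sup>+x. f x \<partial>PM n)"
  using assms(2)
proof (induction n arbitrary: f)
  case 0
  then show ?case by (simp add: PiM_empty nn_integral_count_space_finite)
next
  case (Suc n)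
  define R where "R = (\<lambda>x. restrict (\<lambda>j. a j + c * x j) {..<n})"
  define H where "H = (\<lambda>z. \<integral>\<^sup>+ y. f (z(n := y)) \<partial>lborel)"
  have Rm: "R \<in> measurable (PM n) (PM n)" unfolding R_def by measurable
  have Rm': "(\<lambda>x. restrict (\<lambda>j. a j + c * x j) {..<Suc n}) \<in> measurable (PM (Suc n)) (PM (Suc n))" by measurable
  have Hm: "H \<in> borel_measurable (PM n)" unfolding H_def by (rule meas_H[OF Suc.prems])
  have fR: "(\<lambda>x. f (restrict (\<lambda>j. a j + c * x j) {..<Suc n})) \<in> borel_measurable (PM (Suc n))"
    using measurable_comp[OF Rm' Suc.prems] by (simp add: comp_def)
  have upd: "restrict (\<lambda>j. a j + c * (x(n := y)) j) {..<Suc n} = (R x)(n := a n + c * y)" for x y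
    by (auto simp: R_def fun_eq_iff)
  have inner: "(\<integral>\<^sup>+ y. f ((R x)(n := a n + c * y)) \<partial>lborel) = ennreal (1/c) * H (R x)"
    if "x \<in> space (PM n)" for x
  proof -
    have Rx: "R x \<in> space (PM n)" using Rm that by (rule measurable_space)
    have g: "(\<lambda>y. f ((R x)(n := y))) \<in> borel_measurable borel"
      using measurable_comp[OF measurable_component_update[OF Rx, of n] Suc.prems[unfolded PM_Suc]]
      by (simp add: comp_def)
    have "H (R x) = ennreal c * (\<integral>\<^sup>+ y. f ((R x)(n := a n + c * y)) \<partial>lborel)"
      unfolding H_def using nn_integral_real_affine[OF g, of c "a n"] assms(1) by simp
    then have "ennreal (1/c) * H (R x) = (ennreal (1/c) * ennreal c) * (\<integral>\<^sup>+ y. f ((R x)(n := a n + c * y)) \<partial>lborel)"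
      by (simp add: mult.assoc)
    also have "ennreal (1/c) * ennreal c = 1"
      using assms(1) by (simp add: ennreal_mult[symmetric])
    finally show ?thesis by (metis mult_1)
  qed
  have s1: "(\<integral>\<^sup>+x. f (restrict (\<lambda>j. a j + c * x j) {..<Suc n}) \<partial>PM (Suc n))
      = (\<integral>\<^sup>+ x. (\<integral>\<^sup>+ y. f ((R x)(n := a n + c * y)) \<partial>lborel) \<partial>PM n)"
    by (subst nn_insert[OF fR]) (simp only: upd)
  have s2: "(\<integral>\<^sup>+ x. (\<integral>\<^sup>+ y. f ((R x)(n := a n + c * y)) \<partial>lborel) \<partial>PM n) = (\<integral>\<^sup>+ x. ennreal (1/c) * H (R x) \<partial>PM n)"
    by (rule nn_integral_cong) (rule inner)
  have s3: "(\<integral>\<^sup>+ x. ennreal (1/c) * H (R x) \<partial>PM n) = ennreal (1/c) * (\<integral>\<^sup>+ x. H (R x) \<partial>PM n)"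
    using measurable_comp[OF Rm Hm] by (intro nn_integral_cmult) (simp add: comp_def)
  have s4: "(\<integral>\<^sup>+ x. H (R x) \<partial>PM n) = ennreal (1 / c^n) * (\<integral>\<^sup>+x. H x \<partial>PM n)"
    unfolding R_def by (rule Suc.IH[OF Hm])
  have s5: "(\<integral>\<^sup>+x. H x \<partial>PM n) = (\<integral>\<^sup>+x. f x \<partial>PM (Suc n))"
    unfolding H_def by (rule nn_insert[OF Suc.prems, symmetric])
  have "1 / c^Suc n = (1/c) * (1/c^n)" by simp
  then have e: "ennreal (1/c) * ennreal (1/c^n) = ennreal (1/c^Suc n)"
    using assms(1) by (metis divide_nonneg_nonneg ennreal_mult' less_eq_real_def zero_le_one)
  have "(\<integral>\<^sup>+x. f (restrict (\<lambda>j. a j + c * x j) {..<Suc n}) \<partial>PM (Suc n))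
     = ennreal (1/c) * (ennreal (1 / c^n) * (\<integral>\<^sup>+x. f x \<partial>PM (Suc n)))"
    using trans[OF trans[OF s1 s2] s3] s4 s5 by simp
  then show ?case
    unfolding e[symmetric] mult.assoc .
qed



lemma PM_sf: "sigma_finite_measure (PM n)"
  by (rule PS.sigma_finite) simp

lemma pair_sf: "pair_sigma_finite (PM n) lborel"
  unfolding pair_sigma_finite_def using PM_sf sigma_finite_lborel by blast

lemma bary_sum1: "bary n V \<beta> \<Longrightarrow> (\<Sum>k\<le>n. \<beta> k x) = 1"
  unfolding bary_def by blast

lemma bary_le1:
  assumes "bary n V \<beta>" "x \<in> shull n V" "i \<le> n"
  shows "\<beta> i x \<le> 1"
proof -
  have nn: "\<forall>k\<le>n. 0 \<le> \<beta> k x" using assms(2) unfolding shull_eq[OF assms(1)] by blast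
  have "\<beta> i x \<le> (\<Sum>k\<le>n. \<beta> k x)"
    using assms(3) nn by (intro member_le_sum) auto
  then show ?thesis using bary_sum1[OF assms(1)] by simp
qed

lemma bary_aff: "bary n V \<beta> \<Longrightarrow> k \<le> n \<Longrightarrow> aff n (\<beta> k)"
  unfolding bary_def by blast

lemma bary_delta: "bary n V \<beta> \<Longrightarrow> k \<le> n \<Longrightarrow> l \<le> n \<Longrightarrow> \<beta> k (V l) = (if k = l then 1 else 0)"
  unfolding bary_def by blast

lemma slice_set:
  assumes "bary n V \<beta>" "i \<le> n" "0 \<le> s" "s < 1" "x \<in> space (PM n)"
  defines "c \<equiv> 1 / (1 - s)"
  shows "restrict (\<lambda>j. (1 - c) * V i j + c * x j) {..<n} \<in> shull n V \<longleftrightarrow> x \<in> shull n V \<and> s \<le> \<beta> i x"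
proof -
  let ?y = "restrict (\<lambda>j. (1 - c) * V i j + c * x j) {..<n}"
  have c1: "1 \<le> c" "0 < c" using assms(3,4) unfolding c_def by (auto simp: field_simps)
  have yk: "\<beta> k ?y = c * \<beta> k x + (1 - c) * (if k = i then 1 else 0)" if "k \<le> n" for k
  proof -
    have "\<beta> k ?y = (\<Sum>l\<in>{0::nat,1}. (if l = 0 then c else 1 - c) * \<beta> k (if l = 0 then x else V i))"
    proof (rule aff_comb[where n=n and f="\<beta> k"])
      show "aff n (\<beta> k)" using bary_aff[OF assms(1) that] .
    qed (auto simp: algebra_simps)
    also have "\<dots> = c * \<beta> k x + (1 - c) * (if k = i then 1 else 0)"
      using bary_delta[OF assms(1) that assms(2)] by simp
    finally show ?thesis .
  qed
  have ysp: "?y \<in> space (PM n)" by (simp add: space_PM)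
  have "?y \<in> shull n V \<longleftrightarrow> (\<forall>k\<le>n. 0 \<le> \<beta> k ?y)"
    using ysp unfolding shull_eq[OF assms(1)] by blast
  also have "\<dots> \<longleftrightarrow> (\<forall>k\<le>n. 0 \<le> \<beta> k x) \<and> s \<le> \<beta> i x"
  proof -
    have i: "0 \<le> c * \<beta> i x + (1 - c) \<longleftrightarrow> s \<le> \<beta> i x"
    proof -
      have "0 \<le> c * \<beta> i x + (1 - c) \<longleftrightarrow> 0 \<le> (1 - s) * (c * \<beta> i x + (1 - c))"
        using assms(4) by (simp add: zero_le_mult_iff)
      also have "(1 - s) * (c * \<beta> i x + (1 - c)) = \<beta> i x - s"
      proof -
        have "(1 - s) * c = 1" using assms(4) unfolding c_def by simp
        moreover have "(1 - s) * (c * \<beta> i x + (1 - c)) = ((1 - s) * c) * \<beta> i x + (1 - s) - (1 - s) * c"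
          by (simp add: algebra_simps)
        ultimately show ?thesis by simp
      qed
      finally show ?thesis by simp
    qed
    have k: "0 \<le> c * \<beta> k x \<longleftrightarrow> 0 \<le> \<beta> k x" for k
      using c1 by (simp add: zero_le_mult_iff)
    show ?thesis
    proof
      assume A: "\<forall>k\<le>n. 0 \<le> \<beta> k ?y"
      have "0 \<le> \<beta> i ?y" using A assms(2) by blast
      then have si: "s \<le> \<beta> i x" using yk[OF assms(2)] i by simp
      have "0 \<le> \<beta> k x" if "k \<le> n" for k
      proof (cases "k = i")
        case True then show ?thesis using si assms(3) by simp
      next
        case False
        have "0 \<le> \<beta> k ?y" using A that by blast
        then show ?thesis using False yk[OF that] k by simp
      qed
      then show "(\<forall>k\<le>n. 0 \<le> \<beta> k x) \<and> s \<le> \<beta> i x" using si by blast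
    next
      assume B: "(\<forall>k\<le>n. 0 \<le> \<beta> k x) \<and> s \<le> \<beta> i x"
      show "\<forall>k\<le>n. 0 \<le> \<beta> k ?y"
      proof (intro allI impI)
        fix k assume "k \<le> n"
        then show "0 \<le> \<beta> k ?y"
          using B yk[OF \<open>k \<le> n\<close>] i k by (cases "k = i") auto
      qed
    qed
  qed
  also have "\<dots> \<longleftrightarrow> x \<in> shull n V \<and> s \<le> \<beta> i x"
    using assms(5) unfolding shull_eq[OF assms(1)] by blast
  finally show ?thesis .
qed



lemma slice_measure:
  assumes "bary n V \<beta>" "i \<le> n" "0 \<le> s" "s < 1" "emeasure (PM n) (shull n V) = ennreal v" "0 \<le> v"
  shows "emeasure (PM n) {x \<in> space (PM n). x \<in> shull n V \<and> s \<le> \<beta> i x} = ennreal ((1 - s)^n * v)"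
proof -
  define c where "c = 1 / (1 - s)"
  have c0: "0 < c" using assms(4) unfolding c_def by simp
  let ?K = "shull n V"
  have Ks: "?K \<in> sets (PM n)" by (rule shull_sets[OF assms(1)])
  let ?E = "{x \<in> space (PM n). x \<in> shull n V \<and> s \<le> \<beta> i x}"
  have Es: "?E \<in> sets (PM n)"
  proof -
    have "\<beta> i \<in> borel_measurable (PM n)" using bary_aff[OF assms(1,2)] by (rule aff_meas) simp
    then have "{x \<in> space (PM n). s \<le> \<beta> i x} \<in> sets (PM n)"
      by (intro borel_measurable_le borel_measurable_const)
    then have "{x \<in> space (PM n). s \<le> \<beta> i x} \<inter> ?K \<in> sets (PM n)" using Ks by blast
    moreover have "{x \<in> space (PM n). s \<le> \<beta> i x} \<inter> ?K = ?E" by blast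
    ultimately show ?thesis by simp
  qed
  have ind: "indicator ?K (restrict (\<lambda>j. (1 - c) * V i j + c * x j) {..<n}) = (indicator ?E x :: ennreal)"
    if "x \<in> space (PM n)" for x
    using slice_set[OF assms(1,2,3,4) that] that unfolding c_def by (simp add: indicator_def)
  have Km: "indicator ?K \<in> borel_measurable (PM n)" using Ks by simp
  have "emeasure (PM n) ?E = (\<integral>\<^sup>+x. indicator ?E x \<partial>PM n)"
    using Es by simp
  also have "\<dots> = (\<integral>\<^sup>+x. indicator ?K (restrict (\<lambda>j. (1 - c) * V i j + c * x j) {..<n}) \<partial>PM n)"
    by (rule nn_integral_cong) (simp only: ind)
  also have "\<dots> = ennreal (1 / c^n) * (\<integral>\<^sup>+x. indicator ?K x \<partial>PM n)"
    by (rule homot[OF c0 Km])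
  also have "(\<integral>\<^sup>+x. indicator ?K x \<partial>PM n) = ennreal v"
    using Ks assms(5) by simp
  also have "ennreal (1 / c^n) * ennreal v = ennreal ((1 - s)^n * v)"
  proof -
    have v0: "0 \<le> v" by (rule assms(6))
    have "1 / c^n = (1 - s)^n" unfolding c_def by (simp add: power_divide)
    then show ?thesis using v0 assms(4) by (simp add: ennreal_mult)
  qed
  finally show ?thesis .
qed

lemma int_power_01:
  fixes v :: real assumes "0 \<le> v"
  shows "(\<integral>\<^sup>+s. ennreal (indicator {0..1} s * ((1 - s)^n * v)) \<partial>lborel) = ennreal (v / (n+1))"
proof -
  have "((\<lambda>s. (1 - s)^n * v) has_integral ((\<lambda>s. - ((1 - s)^(n+1) * v / (n+1))) 1 - (\<lambda>s. - ((1 - s)^(n+1) * v / (n+1))) 0)) {0..1}"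
  proof (rule fundamental_theorem_of_calculus)
    fix x :: real
    show "((\<lambda>s. - ((1 - s)^(n+1) * v / (n+1))) has_vector_derivative (1 - x)^n * v) (at x within {0..1})"
      unfolding has_real_derivative_iff_has_vector_derivative[symmetric]
      by (rule derivative_eq_intros refl | simp)+
  qed simp
  then have "((\<lambda>s. (1 - s)^n * v) has_integral v / (n+1)) {0..1}" by simp
  then have "((\<lambda>s. indicator {0..1} s * ((1 - s)^n * v)) has_integral v / (n+1)) UNIV"
  proof -
    have "(\<lambda>s. indicator {0..1} s * ((1 - s)^n * v)) = (\<lambda>s. if s \<in> {0..1} then (1 - s)^n * v else 0)"
      by (auto simp: fun_eq_iff indicator_def)
    then show ?thesis using has_integral_restrict_UNIV[of "{0..1::real}" "\<lambda>s. (1 - s)^n * v"] by (metis \<open>((\<lambda>s. (1 - s)^n * v) has_integral v / (n+1)) {0..1}\<close>)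
  qed
  then show ?thesis
    using assms by (intro nn_integral_has_integral_lborel) (auto simp: indicator_def)
qed

lemma layer:
  assumes "bary n V \<beta>" "i \<le> n" "emeasure (PM n) (shull n V) = ennreal v" "0 \<le> v"
  shows "(\<integral>\<^sup>+x. indicator (shull n V) x * ennreal (\<beta> i x) \<partial>PM n) = ennreal (v / (n+1))"
proof -
  let ?K = "shull n V"
  have Ks[measurable]: "?K \<in> sets (PM n)" by (rule shull_sets[OF assms(1)])
  have bm[measurable]: "\<beta> i \<in> borel_measurable (PM n)" using bary_aff[OF assms(1,2)] by (rule aff_meas) simp
  define F where "F = (\<lambda>x s. if x \<in> ?K \<and> 0 \<le> s \<and> s \<le> \<beta> i x then 1 else 0 :: ennreal)"
  have Fm: "case_prod F \<in> borel_measurable (PM n \<Otimes>\<^sub>M lborel)"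
    unfolding F_def by measurable
  have s1: "indicator ?K x * ennreal (\<beta> i x) = (\<integral>\<^sup>+s. F x s \<partial>lborel)" for x
  proof (cases "x \<in> ?K")
    case True
    have b0: "0 \<le> \<beta> i x" using True assms(2) unfolding shull_eq[OF assms(1)] by blast
    have "(\<integral>\<^sup>+s. F x s \<partial>lborel) = (\<integral>\<^sup>+s. indicator {0..\<beta> i x} s \<partial>lborel)"
      unfolding F_def using True by (intro nn_integral_cong) (simp add: indicator_def)
    also have "\<dots> = ennreal (\<beta> i x)" using b0 by simp
    finally show ?thesis using True by simp
  next
    case False
    then show ?thesis unfolding F_def by simp
  qed
  have s3: "(\<integral>\<^sup>+x. F x s \<partial>PM n) = ennreal (indicator {0..1} s * ((1 - s)^n * v))" if "s \<noteq> 1" for s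
  proof -
    consider "s < 0" | "0 \<le> s" "s < 1" | "1 < s" using \<open>s \<noteq> 1\<close> by linarith
    then show ?thesis
    proof cases
      case 1 then show ?thesis unfolding F_def by simp
    next
      case 2
      let ?E = "{x \<in> space (PM n). x \<in> shull n V \<and> s \<le> \<beta> i x}"
      have Es: "?E \<in> sets (PM n)" by measurable
      have "(\<integral>\<^sup>+x. F x s \<partial>PM n) = (\<integral>\<^sup>+x. indicator ?E x \<partial>PM n)"
        unfolding F_def using 2 by (intro nn_integral_cong) (simp add: indicator_def)
      also have "\<dots> = emeasure (PM n) ?E" using Es by simp
      also have "\<dots> = ennreal ((1 - s)^n * v)" by (rule slice_measure[OF assms(1,2) 2 assms(3,4)])
      finally show ?thesis using 2 by simp
    next
      case 3
      have "F x s = 0" for x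
      proof (cases "x \<in> ?K")
        case True then show ?thesis using bary_le1[OF assms(1) True assms(2)] 3 unfolding F_def by simp
      qed (simp add: F_def)
      then show ?thesis using 3 by simp
    qed
  qed
  interpret P: pair_sigma_finite "PM n" lborel by (rule pair_sf)
  have "(\<integral>\<^sup>+x. indicator ?K x * ennreal (\<beta> i x) \<partial>PM n) = (\<integral>\<^sup>+x. (\<integral>\<^sup>+s. F x s \<partial>lborel) \<partial>PM n)"
    by (simp only: s1)
  also have "\<dots> = (\<integral>\<^sup>+s. (\<integral>\<^sup>+x. F x s \<partial>PM n) \<partial>lborel)"
    by (rule P.Fubini'[OF Fm, symmetric])
  also have "\<dots> = (\<integral>\<^sup>+s. ennreal (indicator {0..1} s * ((1 - s)^n * v)) \<partial>lborel)"
    by (rule nn_integral_cong_AE) (use AE_lborel_singleton[of 1] s3 in \<open>auto elim!: AE_mp\<close>)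
  also have "\<dots> = ennreal (v / (n+1))" by (rule int_power_01[OF assms(4)])
  finally show ?thesis .
qed



lemma interval_meas:
  fixes a b c :: real
  assumes "c \<noteq> 0" "0 \<le> b"
  shows "{t. 0 \<le> (t - a) / c \<and> (t - a) / c \<le> b} \<in> sets lborel"
    and "emeasure lborel {t. 0 \<le> (t - a) / c \<and> (t - a) / c \<le> b} = ennreal (\<bar>c\<bar> * b)"
proof -
  have "{t. 0 \<le> (t - a) / c \<and> (t - a) / c \<le> b} = (if 0 < c then {a..a + c * b} else {a + c * b..a})"
  proof (cases "0 < c")
    case True
    then show ?thesis by (auto simp: zero_le_divide_iff divide_le_eq algebra_simps)
  next
    case False
    then have "c < 0" using assms(1) by simp
    then show ?thesis by (auto simp: zero_le_divide_iff divide_le_eq algebra_simps)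
  qed
  moreover have "0 < c \<Longrightarrow> 0 \<le> c * b" using assms by simp
  moreover have "\<not> 0 < c \<Longrightarrow> c * b \<le> 0" using assms by (simp add: mult_nonpos_nonneg)
  ultimately show "{t. 0 \<le> (t - a) / c \<and> (t - a) / c \<le> b} \<in> sets lborel"
    and "emeasure lborel {t. 0 \<le> (t - a) / c \<and> (t - a) / c \<le> b} = ennreal (\<bar>c\<bar> * b)"
    using assms by (auto simp: abs_if)
qed



locale liftctx =
  fixes n :: nat and V :: "nat \<Rightarrow> nat \<Rightarrow> real" and \<beta> :: "nat \<Rightarrow> (nat \<Rightarrow> real) \<Rightarrow> real"
    and \<tau> :: "nat \<Rightarrow> nat" and W :: "nat \<Rightarrow> nat \<Rightarrow> real" and g :: "nat \<Rightarrow> real" and c :: real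
  assumes bV: "bary n V \<beta>"
    and bij: "bij_betw \<tau> {..n} {..n}"
    and \<tau>0: "\<tau> (Suc n) = \<tau> 0"
    and W: "\<And>l j. l \<le> Suc n \<Longrightarrow> j < n \<Longrightarrow> W l j = V (\<tau> l) j"
    and Wn: "\<And>l. l \<le> Suc n \<Longrightarrow> W l n = g l"
    and cdef: "g (Suc n) - g 0 = c"
    and c0: "c \<noteq> 0"
begin

definition lo where "lo x = (\<Sum>l\<le>n. g l * \<beta> (\<tau> l) x)"
definition u where "u x = (1 / c) * (x n - lo x)"
definition \<gamma> where "\<gamma> l x = (if l = Suc n then u x else if l = 0 then \<beta> (\<tau> 0) x - u x else \<beta> (\<tau> l) x)"

lemma \<tau>_le: "l \<le> n \<Longrightarrow> \<tau> l \<le> n"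
  using bij unfolding bij_betw_def by auto

lemma \<tau>_le': "l \<le> Suc n \<Longrightarrow> \<tau> l \<le> n"
  using \<tau>_le \<tau>0 by (cases "l = Suc n") auto

lemma \<tau>_inj: "l \<le> n \<Longrightarrow> l' \<le> n \<Longrightarrow> \<tau> l = \<tau> l' \<longleftrightarrow> l = l'"
  using bij unfolding bij_betw_def inj_on_def by auto

lemma \<tau>0_le: "\<tau> 0 \<le> n" by (rule \<tau>_le) simp

lemma reidx: "(\<Sum>l\<le>n. h (\<tau> l)) = (\<Sum>k\<le>n. h k)"
  using sum.reindex_bij_betw[OF bij, of h] by simp

lemma aff_\<beta>: "k \<le> n \<Longrightarrow> aff (Suc n) (\<beta> k)"
  using bary_aff[OF bV] aff_mono by (meson le_SucI order_refl)

lemma aff_lo: "aff (Suc n) lo"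
proof -
  have "aff (Suc n) (\<lambda>x. \<Sum>l\<le>n. g l * \<beta> (\<tau> l) x)"
    by (intro aff_sum aff_mult aff_\<beta> \<tau>_le) auto
  then show ?thesis unfolding lo_def[abs_def] .
qed

lemma aff_u: "aff (Suc n) u"
proof -
  have "aff (Suc n) (\<lambda>x. (1 / c) * (x n - lo x))"
    by (intro aff_mult aff_diff aff_coord aff_lo) simp
  then show ?thesis unfolding u_def[abs_def] .
qed

lemma aff_\<gamma>: assumes "l \<le> Suc n" shows "aff (Suc n) (\<gamma> l)"
proof -
  consider "l = Suc n" | "l = 0" | "l \<noteq> Suc n" "l \<noteq> 0" by blast
  then show ?thesis
  proof cases
    case 1 then show ?thesis using aff_u unfolding \<gamma>_def[abs_def] by simp
  next
    case 2
    have "aff (Suc n) (\<lambda>x. \<beta> (\<tau> 0) x - u x)" by (intro aff_diff aff_\<beta> aff_u \<tau>_le) simp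
    then show ?thesis using 2 unfolding \<gamma>_def[abs_def] by simp
  next
    case 3
    show ?thesis
    proof (cases "l \<le> n")
      case True
      have "aff (Suc n) (\<beta> (\<tau> l))" by (intro aff_\<beta> \<tau>_le True)
      then show ?thesis using 3 unfolding \<gamma>_def[abs_def] by simp
    next
      case False
      then show ?thesis using 3 \<open>l \<le> Suc n\<close> by simp
    qed
  qed
qed

lemma gsum: "(\<Sum>l\<le>Suc n. \<gamma> l x * w l) = u x * (w (Suc n) - w 0) + (\<Sum>l\<le>n. \<beta> (\<tau> l) x * w l)"
proof -
  have "(\<Sum>l\<le>n. \<gamma> l x * w l) = (\<Sum>l\<le>n. \<beta> (\<tau> l) x * w l - (if l = 0 then u x * w 0 else 0))"
    by (rule sum.cong) (auto simp: \<gamma>_def algebra_simps)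
  also have "\<dots> = (\<Sum>l\<le>n. \<beta> (\<tau> l) x * w l) - u x * w 0"
    by (simp add: sum_subtractf)
  finally show ?thesis by (simp add: \<gamma>_def algebra_simps)
qed

lemma lo_W: "l \<le> Suc n \<Longrightarrow> lo (W l) = (if l = Suc n then g 0 else g l)"
proof -
  assume l: "l \<le> Suc n"
  have bW: "\<beta> k (W l) = (if k = \<tau> l then 1 else 0)" if "k \<le> n" for k
  proof -
    have "\<beta> k (W l) = \<beta> k (V (\<tau> l))"
      using bary_aff[OF bV that] by (rule aff_local) (simp add: W l)
    also have "\<dots> = (if k = \<tau> l then 1 else 0)" using bary_delta[OF bV that \<tau>_le'[OF l]] .
    finally show ?thesis .
  qed
  have "lo (W l) = (\<Sum>l'\<le>n. g l' * (if \<tau> l' = \<tau> l then 1 else 0))"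
    unfolding lo_def by (rule sum.cong) (simp_all add: bW \<tau>_le)
  also have "\<dots> = (\<Sum>l'\<le>n. if l' = (if l = Suc n then 0 else l) then g l' else 0)"
  proof (rule sum.cong)
    fix l' assume "l' \<in> {..n}"
    then show "g l' * (if \<tau> l' = \<tau> l then 1 else 0) = (if l' = (if l = Suc n then 0 else l) then g l' else 0)"
      using \<tau>_inj[of l' l] \<tau>_inj[of l' 0] \<tau>0 l by (cases "l = Suc n") auto
  qed simp
  also have "\<dots> = (if l = Suc n then g 0 else g l)" using l by (cases "l = Suc n") auto
  finally show ?thesis .
qed

lemma bary_W: "bary (Suc n) W \<gamma>"
  unfolding bary_def
proof (intro conjI allI impI)
  fix k assume "k \<le> Suc n" then show "aff (Suc n) (\<gamma> k)" by (rule aff_\<gamma>)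
next
  fix x
  have "(\<Sum>k\<le>Suc n. \<gamma> k x) = (\<Sum>l\<le>Suc n. \<gamma> l x * 1)" by simp
  also have "\<dots> = (\<Sum>l\<le>n. \<beta> (\<tau> l) x)" by (simp only: gsum) simp
  also have "\<dots> = (\<Sum>k\<le>n. \<beta> k x)" by (rule reidx)
  also have "\<dots> = 1" by (rule bary_sum1[OF bV])
  finally show "(\<Sum>k\<le>Suc n. \<gamma> k x) = 1" .
next
  fix x j assume j: "j < Suc n"
  show "(\<Sum>k\<le>Suc n. \<gamma> k x * W k j) = x j"
  proof (cases "j < n")
    case True
    have "(\<Sum>k\<le>Suc n. \<gamma> k x * W k j) = (\<Sum>k\<le>Suc n. \<gamma> k x * V (\<tau> k) j)"
      by (rule sum.cong) (simp_all add: W True)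
    also have "\<dots> = (\<Sum>l\<le>n. \<beta> (\<tau> l) x * V (\<tau> l) j)" by (simp only: gsum \<tau>0) simp
    also have "\<dots> = (\<Sum>k\<le>n. \<beta> k x * V k j)" by (rule reidx)
    also have "\<dots> = x j" using bV True unfolding bary_def by blast
    finally show ?thesis .
  next
    case False
    then have jn: "j = n" using j by simp
    have "(\<Sum>k\<le>Suc n. \<gamma> k x * W k j) = (\<Sum>k\<le>Suc n. \<gamma> k x * g k)"
      by (rule sum.cong) (simp_all add: Wn jn)
    also have "\<dots> = u x * c + lo x" by (simp only: gsum cdef) (simp add: lo_def mult.commute)
    also have "\<dots> = x j" using c0 by (simp add: u_def jn)
    finally show ?thesis .
  qed
next
  fix k l assume k: "k \<le> Suc n" and l: "l \<le> Suc n"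
  have bW: "\<beta> k' (W l) = (if k' = \<tau> l then 1 else 0)" if "k' \<le> n" for k'
  proof -
    have "\<beta> k' (W l) = \<beta> k' (V (\<tau> l))"
      using bary_aff[OF bV that] by (rule aff_local) (simp add: W l)
    also have "\<dots> = (if k' = \<tau> l then 1 else 0)" using bary_delta[OF bV that \<tau>_le'[OF l]] .
    finally show ?thesis .
  qed
  have uW: "u (W l) = (if l = Suc n then 1 else 0)"
    using c0 cdef unfolding u_def by (simp add: lo_W[OF l] Wn[OF l])
  show "\<gamma> k (W l) = (if k = l then 1 else 0)"
  proof -
    consider "k = Suc n" | "k = 0" | "1 \<le> k" "k \<le> n" using k by linarith
    then show ?thesis
    proof cases
      case 1 then show ?thesis using uW by (simp add: \<gamma>_def)
    next
      case 2
      have "\<beta> (\<tau> 0) (W l) = (if \<tau> 0 = \<tau> l then 1 else 0)" using bW[OF \<tau>_le[of 0]] by simp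
      moreover have "\<tau> 0 = \<tau> l \<longleftrightarrow> l = 0 \<or> l = Suc n"
        using \<tau>_inj[of 0 l] \<tau>0 l by (cases "l = Suc n") auto
      ultimately show ?thesis using 2 uW by (auto simp: \<gamma>_def)
    next
      case 3
      have "\<beta> (\<tau> k) (W l) = (if \<tau> k = \<tau> l then 1 else 0)" using bW[OF \<tau>_le[OF 3(2)]] by simp
      moreover have "\<tau> k = \<tau> l \<longleftrightarrow> k = l"
        using \<tau>_inj[of k l] \<tau>_inj[of k 0] \<tau>0 l 3 by (cases "l = Suc n") auto
      ultimately show ?thesis using 3 by (auto simp: \<gamma>_def)
    qed
  qed
qed

lemma fiber:
  assumes x: "x \<in> space (PM n)"
  shows "x(n := t) \<in> shull (Suc n) W \<longleftrightarrow>
    x \<in> shull n V \<and> 0 \<le> (t - lo x) / c \<and> (t - lo x) / c \<le> \<beta> (\<tau> 0) x"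
proof -
  let ?y = "x(n := t)"
  have ysp: "?y \<in> space (PM (Suc n))"
    using measurable_space[OF measurable_component_update[OF x, of n]] unfolding PM_Suc by simp
  have bY: "\<beta> k ?y = \<beta> k x" if "k \<le> n" for k
    using bary_aff[OF bV that] by (rule aff_local) simp
  have loy: "lo ?y = lo x" unfolding lo_def by (rule sum.cong) (simp_all add: bY \<tau>_le)
  have uy: "u ?y = (t - lo x) / c" unfolding u_def loy by simp
  have "?y \<in> shull (Suc n) W \<longleftrightarrow> (\<forall>l\<le>Suc n. 0 \<le> \<gamma> l ?y)"
    using ysp unfolding shull_eq[OF bary_W] by blast
  also have "\<dots> \<longleftrightarrow> (\<forall>k\<le>n. 0 \<le> \<beta> k x) \<and> 0 \<le> (t - lo x) / c \<and> (t - lo x) / c \<le> \<beta> (\<tau> 0) x"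
  proof
    assume A: "\<forall>l\<le>Suc n. 0 \<le> \<gamma> l ?y"
    have u0: "0 \<le> (t - lo x) / c" using A[rule_format, of "Suc n"] uy by (simp add: \<gamma>_def)
    have u1: "(t - lo x) / c \<le> \<beta> (\<tau> 0) x" using A[rule_format, of 0] uy by (simp add: \<gamma>_def bY \<tau>_le)
    have "0 \<le> \<beta> k x" if k: "k \<le> n" for k
    proof -
      obtain l where l: "l \<le> n" "k = \<tau> l" using bij k unfolding bij_betw_def by auto
      show ?thesis
      proof (cases "l = 0")
        case True then show ?thesis using u0 u1 l by simp
      next
        case False
        then have "0 \<le> \<gamma> l ?y" using A l by simp
        then show ?thesis using False l by (simp add: \<gamma>_def bY \<tau>_le)
      qed
    qed
    then show "(\<forall>k\<le>n. 0 \<le> \<beta> k x) \<and> 0 \<le> (t - lo x) / c \<and> (t - lo x) / c \<le> \<beta> (\<tau> 0) x"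
      using u0 u1 by blast
  next
    assume B: "(\<forall>k\<le>n. 0 \<le> \<beta> k x) \<and> 0 \<le> (t - lo x) / c \<and> (t - lo x) / c \<le> \<beta> (\<tau> 0) x"
    show "\<forall>l\<le>Suc n. 0 \<le> \<gamma> l ?y"
    proof (intro allI impI)
      fix l assume l: "l \<le> Suc n"
      consider "l = Suc n" | "l = 0" | "l \<noteq> Suc n" "l \<noteq> 0" by blast
      then show "0 \<le> \<gamma> l ?y"
      proof cases
        case 1 then show ?thesis using B uy by (simp add: \<gamma>_def)
      next
        case 2 then show ?thesis using B uy by (simp add: \<gamma>_def bY \<tau>_le)
      next
        case 3
        then have "l \<le> n" using l by simp
        then show ?thesis using B 3 by (simp add: \<gamma>_def bY \<tau>_le)
      qed
    qed
  qed
  also have "\<dots> \<longleftrightarrow> x \<in> shull n V \<and> 0 \<le> (t - lo x) / c \<and> (t - lo x) / c \<le> \<beta> (\<tau> 0) x"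
    using x unfolding shull_eq[OF bV] by blast
  finally show ?thesis .
qed

lemma lift_meas:
  assumes vol: "emeasure (PM n) (shull n V) = ennreal v" "0 \<le> v"
  shows "emeasure (PM (Suc n)) (shull (Suc n) W) = ennreal (\<bar>c\<bar> * v / (n+1))"
proof -
  let ?K = "shull n V" and ?L = "shull (Suc n) W"
  have Ks[measurable]: "?K \<in> sets (PM n)" by (rule shull_sets[OF bV])
  have Ls: "?L \<in> sets (PM (Suc n))" by (rule shull_sets[OF bary_W])
  have bm[measurable]: "\<beta> (\<tau> 0) \<in> borel_measurable (PM n)"
    using bary_aff[OF bV \<tau>0_le] by (rule aff_meas) simp
  have Lm: "indicator ?L \<in> borel_measurable (PM (Suc n))" using Ls by simp
  have inner: "(\<integral>\<^sup>+t. indicator ?L (x(n := t)) \<partial>lborel) = ennreal \<bar>c\<bar> * (indicator ?K x * ennreal (\<beta> (\<tau> 0) x))"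
    if x: "x \<in> space (PM n)" for x
  proof (cases "x \<in> ?K")
    case True
    have b0: "0 \<le> \<beta> (\<tau> 0) x" using True \<tau>0_le unfolding shull_eq[OF bV] by auto
    let ?S = "{t. 0 \<le> (t - lo x) / c \<and> (t - lo x) / c \<le> \<beta> (\<tau> 0) x}"
    have "(\<integral>\<^sup>+t. indicator ?L (x(n := t)) \<partial>lborel) = (\<integral>\<^sup>+t. indicator ?S t \<partial>lborel)"
      by (rule nn_integral_cong) (simp add: indicator_def fiber[OF x] True)
    also have "\<dots> = emeasure lborel ?S" using interval_meas(1)[OF c0 b0] by simp
    also have "\<dots> = ennreal (\<bar>c\<bar> * \<beta> (\<tau> 0) x)" by (rule interval_meas(2)[OF c0 b0])
    also have "\<dots> = ennreal \<bar>c\<bar> * (indicator ?K x * ennreal (\<beta> (\<tau> 0) x))"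
      using True b0 by (simp add: ennreal_mult)
    finally show ?thesis .
  next
    case False
    then show ?thesis by (simp add: indicator_def fiber[OF x])
  qed
  have "emeasure (PM (Suc n)) ?L = (\<integral>\<^sup>+y. indicator ?L y \<partial>PM (Suc n))" using Ls by simp
  also have "\<dots> = (\<integral>\<^sup>+x. (\<integral>\<^sup>+t. indicator ?L (x(n := t)) \<partial>lborel) \<partial>PM n)"
    by (rule nn_insert[OF Lm])
  also have "\<dots> = (\<integral>\<^sup>+x. ennreal \<bar>c\<bar> * (indicator ?K x * ennreal (\<beta> (\<tau> 0) x)) \<partial>PM n)"
    by (rule nn_integral_cong) (rule inner)
  also have "\<dots> = ennreal \<bar>c\<bar> * (\<integral>\<^sup>+x. indicator ?K x * ennreal (\<beta> (\<tau> 0) x) \<partial>PM n)"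
    by (rule nn_integral_cmult) measurable
  also have "(\<integral>\<^sup>+x. indicator ?K x * ennreal (\<beta> (\<tau> 0) x) \<partial>PM n) = ennreal (v / (n+1))"
    by (rule layer[OF bV \<tau>0_le vol])
  also have "ennreal \<bar>c\<bar> * ennreal (v / (n+1)) = ennreal (\<bar>c\<bar> * v / (n+1))"
    using vol(2) by (simp add: ennreal_mult[symmetric])
  finally show ?thesis .
qed

end



lemma mod_inj:
  fixes z :: int and l l' m :: nat
  assumes "(z + int l) mod int m = (z + int l') mod int m" "l < m" "l' < m"
  shows "l = l'"
proof -
  have "int m dvd (z + int l) - (z + int l')" using assms(1) by (simp add: mod_eq_dvd_iff)
  then have d: "int m dvd int l - int l'" by simp
  then obtain q where q: "int l - int l' = int m * q" by (elim dvdE)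
  consider "q = 0" | "1 \<le> q" | "q \<le> -1" by linarith
  then show ?thesis
  proof cases
    case 1 then show ?thesis using q by simp
  next
    case 2
    have "int m * 1 \<le> int m * q" using 2 by (intro mult_left_mono) simp_all
    then show ?thesis using q assms(2,3) by linarith
  next
    case 3
    have "int m * q \<le> int m * (-1)" using 3 by (intro mult_left_mono) simp_all
    then show ?thesis using q assms(2,3) by linarith
  qed
qed

lemma mod_bij:
  fixes z :: int and m :: nat
  assumes "0 < m"
  shows "bij_betw (\<lambda>l. nat ((z + int l) mod int m)) {..<m} {..<m}"
proof -
  let ?f = "\<lambda>l. nat ((z + int l) mod int m)"
  have inj: "inj_on ?f {..<m}"
  proof (rule inj_onI)
    fix l l' assume "l \<in> {..<m}" "l' \<in> {..<m}" "?f l = ?f l'"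
    moreover have "0 \<le> (z + int l) mod int m" "0 \<le> (z + int l') mod int m" using assms by simp_all
    ultimately have "(z + int l) mod int m = (z + int l') mod int m" by (simp add: eq_nat_nat_iff)
    then show "l = l'" using mod_inj[of z l m l'] \<open>l \<in> {..<m}\<close> \<open>l' \<in> {..<m}\<close> by simp
  qed
  have sub: "?f ` {..<m} \<subseteq> {..<m}"
  proof
    fix y assume "y \<in> ?f ` {..<m}"
    then obtain l where "y = ?f l" by blast
    moreover have "(z + int l) mod int m < int m" "0 \<le> (z + int l) mod int m" using assms by simp_all
    ultimately show "y \<in> {..<m}" by (simp add: nat_less_iff)
  qed
  have "?f ` {..<m} = {..<m}" using endo_inj_surj[OF _ sub inj] by simp
  then show ?thesis using inj unfolding bij_betw_def by blast
qed

lemma the_mult: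
  fixes p :: real and a :: int
  assumes "p \<noteq> 0"
  shows "(THE j::int. of_int a * p = of_int j * p) = a"
  using assms by (intro the_equality) auto

lemma step:
  fixes m' :: nat and K :: "real list list" and z z' :: int and P :: real
  assumes p1: "p m' \<noteq> 0" and p2: "p (Suc m') \<noteq> 0"
    and pmb: "bij_betw (pm (Suc m')) {..<Suc m'} {..<Suc m'}"
    and Kl: "length K = Suc m'" and Kl2: "\<forall>l<Suc m'. length (K!l) = m'"
    and Kz: "\<forall>l<Suc m'. K!l!(m'-1) = of_int (z' + int l) * p m'"
    and Kb: "bary m' (\<lambda>k j. K!k!j) \<beta>"
    and Kv: "emeasure (PM m') (shull m' (\<lambda>k j. K!k!j)) = ennreal P" and P0: "0 \<le> P"
    and vs: "vs = map (\<lambda>i. Bvert p pm (Suc m') K (z + int i)) [0..<Suc (Suc m')]"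
  shows "length vs = Suc (Suc m') \<and> (\<forall>l\<le>Suc m'. length (vs!l) = Suc m')
    \<and> (\<forall>l\<le>Suc m'. vs!l!(Suc m' - 1) = of_int (z + int l) * p (Suc m'))
    \<and> (\<exists>\<gamma>. bary (Suc m') (\<lambda>k j. vs!k!j) \<gamma>)
    \<and> emeasure (PM (Suc m')) (shull (Suc m') (\<lambda>k j. vs!k!j)) = ennreal (P * \<bar>p (Suc m')\<bar>)"
proof -
  define m where "m = Suc m'"
  have m0: "0 < m" unfolding m_def by simp
  define \<sigma> where "\<sigma> l = pm m (nat ((z' + int l) mod int m))" for l
  have \<sigma>bij: "bij_betw \<sigma> {..<m} {..<m}"
    unfolding \<sigma>_def[abs_def] using bij_betw_trans[OF mod_bij[OF m0, of z'] pmb[folded m_def]]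
    by (simp add: comp_def)
  have colK: "pm m (col p m' (K!l)) = \<sigma> l" if "l < m" for l
  proof -
    have "(THE j::int. K!l!(m'-1) = of_int j * p m') = z' + int l"
      using Kz that the_mult[OF p1, of "z' + int l"] unfolding m_def by simp
    then show ?thesis unfolding col_def \<sigma>_def m_def by (simp add: add.commute)
  qed
  define \<rho> where "\<rho> = the_inv_into {..<m} \<sigma>"
  have \<rho>bij: "bij_betw \<rho> {..<m} {..<m}" unfolding \<rho>_def by (rule bij_betw_the_inv_into[OF \<sigma>bij])
  have \<sigma>\<rho>: "\<sigma> (\<rho> i) = i" if "i < m" for i
    unfolding \<rho>_def using f_the_inv_into_f_bij_betw[OF \<sigma>bij] that by simp
  have \<rho>\<sigma>: "\<rho> (\<sigma> l) = l" if "l < m" for l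
    unfolding \<rho>_def using the_inv_into_f_f[OF bij_betw_imp_inj_on[OF \<sigma>bij]] that by simp
  have \<rho>lt: "\<rho> i < m" if "i < m" for i using \<rho>bij that unfolding bij_betw_def by auto
  have Av: "Avert p pm m K i = K!(\<rho> i)" if i: "i < m" for i
    unfolding Avert_def
  proof (rule the_equality)
    show "K!(\<rho> i) \<in> set K \<and> pm m (col p (m - 1) (K!(\<rho> i))) = i"
      using \<rho>lt[OF i] Kl colK \<sigma>\<rho>[OF i] unfolding m_def by simp
  next
    fix A assume A: "A \<in> set K \<and> pm m (col p (m - 1) A) = i"
    then obtain l where l: "l < m" "A = K!l" using Kl unfolding m_def by (auto simp: in_set_conv_nth)
    then have "\<sigma> l = i" using A colK unfolding m_def by simp
    then have "\<rho> i = l" using \<rho>\<sigma>[OF l(1)] by simp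
    then show "A = K!(\<rho> i)" using l by simp
  qed
  define \<tau> where "\<tau> l = \<rho> (nat ((z + int l) mod int m))" for l
  have modlt: "nat ((z + int l) mod int m) < m" for l
    using m0 by (simp add: nat_less_iff)
  have \<tau>bij: "bij_betw \<tau> {..m'} {..m'}"
  proof -
    have "bij_betw \<tau> {..<m} {..<m}"
      unfolding \<tau>_def[abs_def] using bij_betw_trans[OF mod_bij[OF m0, of z] \<rho>bij] by (simp add: comp_def)
    moreover have "{..<m} = {..m'}" unfolding m_def by auto
    ultimately show ?thesis by simp
  qed
  have \<tau>0: "\<tau> (Suc m') = \<tau> 0"
  proof -
    have "(z + int (Suc m')) mod int m = (z + int 0) mod int m" unfolding m_def by simp
    then show ?thesis unfolding \<tau>_def by simp
  qed
  have \<tau>lt: "\<tau> l < m" for l unfolding \<tau>_def by (rule \<rho>lt[OF modlt])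
  define g where "g l = of_int (z + int l) * p m" for l
  define c where "c = of_nat m * p m"
  have vsl: "vs!l = K!(\<tau> l) @ [g l]" if "l \<le> Suc m'" for l
  proof -
    have "vs!l = Bvert p pm m K (z + int l)" using that unfolding vs m_def
      by (simp del: upt_Suc)
    also have "\<dots> = K!(\<tau> l) @ [g l]"
      unfolding Bvert_def Av[OF modlt] \<tau>_def g_def ..
    finally show ?thesis .
  qed
  have lenK: "length (K!(\<tau> l)) = m'" for l using Kl2 \<tau>lt unfolding m_def by blast
  interpret L: liftctx m' "\<lambda>k j. K!k!j" \<beta> \<tau> "\<lambda>k j. vs!k!j" g c
  proof
    show "bary m' (\<lambda>k j. K!k!j) \<beta>" by (rule Kb)
    show "bij_betw \<tau> {..m'} {..m'}" by (rule \<tau>bij)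
    show "\<tau> (Suc m') = \<tau> 0" by (rule \<tau>0)
    show "vs!l!j = K!(\<tau> l)!j" if "l \<le> Suc m'" "j < m'" for l j
      using that vsl lenK by (simp add: nth_append)
    show "vs!l!m' = g l" if "l \<le> Suc m'" for l
      using that vsl lenK by (simp add: nth_append)
    show "g (Suc m') - g 0 = c" unfolding g_def c_def m_def by (simp add: algebra_simps)
    show "c \<noteq> 0" unfolding c_def m_def using p2 by simp
  qed
  have meas: "emeasure (PM (Suc m')) (shull (Suc m') (\<lambda>k j. vs!k!j)) = ennreal (\<bar>c\<bar> * P / (m' + 1))"
    by (rule L.lift_meas[OF Kv P0])
  have "\<bar>c\<bar> * P / (m' + 1) = P * \<bar>p (Suc m')\<bar>"
  proof -
    have "\<bar>c\<bar> = real (m' + 1) * \<bar>p (Suc m')\<bar>" unfolding c_def m_def by (simp add: abs_mult)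
    then show ?thesis by simp
  qed
  then show ?thesis
    using meas L.bary_W vsl lenK unfolding vs m_def g_def by (auto simp: nth_append simp del: upt_Suc)
qed

definition good :: "(nat \<Rightarrow> real) \<Rightarrow> nat \<Rightarrow> real list list \<Rightarrow> bool" where
  "good p n vs \<longleftrightarrow> length vs = Suc n \<and> (\<forall>l\<le>n. length (vs!l) = n)
    \<and> (\<exists>z::int. \<forall>l\<le>n. vs!l!(n-1) = of_int (z + int l) * p n)
    \<and> (\<exists>\<gamma>. bary n (\<lambda>k j. vs!k!j) \<gamma>)
    \<and> emeasure (PM n) (shull n (\<lambda>k j. vs!k!j)) = ennreal (\<Prod>i=1..n. \<bar>p i\<bar>)"

lemma base:
  assumes p1: "p (1::nat) \<noteq> 0" and vs: "vs = [[of_int z * p 1], [of_int (z + 1) * p 1]]"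
  shows "good p 1 vs"
proof -
  define V0 where "V0 = (\<lambda>(k::nat) (j::nat). 0::real)"
  define b0 where "b0 = (\<lambda>(k::nat) (x::nat \<Rightarrow> real). 1::real)"
  have B0: "bary 0 V0 b0" unfolding bary_def b0_def by (simp add: aff_const)
  have S0: "shull 0 V0 = {\<lambda>_. undefined}"
  proof -
    have "restrict f {..<0::nat} = (\<lambda>_. undefined)" for f :: "nat \<Rightarrow> real" by (simp add: fun_eq_iff)
    then show ?thesis unfolding shull_def by (auto intro!: exI[of _ "\<lambda>_. 1"])
  qed
  have E0: "emeasure (PM 0) (shull 0 V0) = ennreal 1" unfolding S0 by simp
  define g where "g l = of_int (z + int l) * p 1" for l
  interpret L: liftctx 0 V0 b0 "\<lambda>_::nat. 0::nat" "\<lambda>k j. vs!k!j" g "p 1"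
  proof
    show "bary 0 V0 b0" by (rule B0)
    show "bij_betw (\<lambda>_::nat. 0::nat) {..0} {..0}" by (auto simp: bij_betw_def inj_on_def)
    show "vs ! l ! 0 = g l" if "l \<le> Suc 0" for l
      using that unfolding vs g_def by (cases l) auto
    show "g (Suc 0) - g 0 = p 1" unfolding g_def by (simp add: algebra_simps)
  qed (use p1 in auto)
  have "emeasure (PM 1) (shull 1 (\<lambda>k j. vs!k!j)) = ennreal (\<bar>p 1\<bar> * 1 / (0 + 1))"
    using L.lift_meas[OF E0] by simp
  moreover have "\<forall>l\<le>1. vs!l!(1-1) = of_int (z + int l) * p 1"
  proof (intro allI impI)
    fix l :: nat assume "l \<le> 1"
    then show "vs!l!(1-1) = of_int (z + int l) * p 1" unfolding vs by (cases l) auto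
  qed
  moreover have "\<forall>l\<le>1. length (vs!l) = 1"
  proof (intro allI impI)
    fix l :: nat assume "l \<le> 1"
    then show "length (vs!l) = 1" unfolding vs by (cases l) auto
  qed
  ultimately show ?thesis using L.bary_W unfolding good_def by (auto simp: vs)
qed

lemma main:
  assumes p: "\<forall>i\<in>{1..d}. p i \<noteq> 0" and pm: "\<forall>i\<in>{2..d}. bij_betw (pm i) {..<i} {..<i}"
  shows "1 \<le> n \<Longrightarrow> n \<le> d \<Longrightarrow> vs \<in> Tv p pm n \<Longrightarrow> good p n vs"
proof (induction n arbitrary: vs)
  case 0 then show ?case by simp
next
  case (Suc m)
  show ?case
  proof (cases m)
    case 0
    then obtain z where "vs = [[of_int z * p 1], [of_int (z + 1) * p 1]]" using Suc.prems(3) by auto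
    moreover have "p 1 \<noteq> 0" using p Suc.prems 0 by auto
    ultimately show ?thesis using base 0 by simp
  next
    case (Suc m')
    then obtain K z where K: "K \<in> Tv p pm (Suc m')"
      and vs: "vs = map (\<lambda>i. Bvert p pm (Suc (Suc m')) K (z + int i)) [0..<Suc (Suc (Suc m'))]"
      using Suc.prems(3) by auto
    have gK: "good p (Suc m') K" using Suc.IH[of K] Suc.prems K \<open>m = Suc m'\<close> by simp
    then obtain z' \<beta> where Kl: "length K = Suc (Suc m')" and Kl2: "\<forall>l\<le>Suc m'. length (K!l) = Suc m'"
      and Kz: "\<forall>l\<le>Suc m'. K!l!(Suc m'-1) = of_int (z' + int l) * p (Suc m')"
      and Kb: "bary (Suc m') (\<lambda>k j. K!k!j) \<beta>"
      and Kv: "emeasure (PM (Suc m')) (shull (Suc m') (\<lambda>k j. K!k!j)) = ennreal (\<Prod>i=1..Suc m'. \<bar>p i\<bar>)"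
      unfolding good_def by blast
    have d: "Suc (Suc m') \<le> d" using Suc.prems \<open>m = Suc m'\<close> by simp
    have p1: "p (Suc m') \<noteq> 0" using p d by auto
    have p2: "p (Suc (Suc m')) \<noteq> 0" using p d by auto
    have pmb: "bij_betw (pm (Suc (Suc m'))) {..<Suc (Suc m')} {..<Suc (Suc m')}" using pm d by auto
    have R: "length vs = Suc (Suc (Suc m')) \<and> (\<forall>l\<le>Suc (Suc m'). length (vs!l) = Suc (Suc m'))
      \<and> (\<forall>l\<le>Suc (Suc m'). vs!l!(Suc (Suc m') - 1) = of_int (z + int l) * p (Suc (Suc m')))
      \<and> (\<exists>\<gamma>. bary (Suc (Suc m')) (\<lambda>k j. vs!k!j) \<gamma>)
      \<and> emeasure (PM (Suc (Suc m'))) (shull (Suc (Suc m')) (\<lambda>k j. vs!k!j))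
          = ennreal ((\<Prod>i=1..Suc m'. \<bar>p i\<bar>) * \<bar>p (Suc (Suc m'))\<bar>)"
    proof (rule step[OF p1 p2 pmb Kl _ _ Kb Kv _ vs])
      show "\<forall>l<Suc (Suc m'). length (K!l) = Suc m'" using Kl2 by (simp add: less_Suc_eq_le)
      show "\<forall>l<Suc (Suc m'). K!l!(Suc m'-1) = of_int (z' + int l) * p (Suc m')" using Kz by (simp add: less_Suc_eq_le)
      show "0 \<le> (\<Prod>i=1..Suc m'. \<bar>p i\<bar>)" by (simp add: prod_nonneg)
    qed
    have "(\<Prod>i=1..Suc m'. \<bar>p i\<bar>) * \<bar>p (Suc (Suc m'))\<bar> = (\<Prod>i=1..Suc (Suc m'). \<bar>p i\<bar>)"
      by (simp add: prod.nat_ivl_Suc' mult.commute)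
    then show ?thesis using R \<open>m = Suc m'\<close> unfolding good_def by (metis)
  qed
qed

lemma img:
  assumes "length vs = Suc d"
  shows "(\<lambda>xs. \<lambda>i\<in>{..<d}. xs!i) ` lconv d vs = shull d (\<lambda>k j. vs!k!j)"
proof -
  have e: "(\<lambda>i\<in>{..<d}. map (\<lambda>k. \<Sum>i<length vs. t i * vs!i!k) [0..<d] ! i)
        = restrict (\<lambda>j. \<Sum>k\<le>d. t k * vs!k!j) {..<d}" for t
    using assms by (auto simp: fun_eq_iff lessThan_Suc_atMost)
  have c: "(\<forall>i<length vs. 0 \<le> t i) \<and> (\<Sum>i<length vs. t i) = 1 \<longleftrightarrow> (\<forall>k\<le>d. 0 \<le> t k) \<and> (\<Sum>k\<le>d. t k) = 1" for t :: "nat \<Rightarrow> real"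
    using assms by (simp add: lessThan_Suc_atMost less_Suc_eq_le)
  show ?thesis
    unfolding lconv_def shull_def
  proof (intro equalityI subsetI)
    fix y assume "y \<in> (\<lambda>xs. \<lambda>i\<in>{..<d}. xs!i) ` {map (\<lambda>k. \<Sum>i<length vs. t i * vs!i!k) [0..<d] | t. (\<forall>i<length vs. 0 \<le> t i) \<and> (\<Sum>i<length vs. t i) = 1}"
    then obtain t where t: "(\<forall>i<length vs. 0 \<le> t i) \<and> (\<Sum>i<length vs. t i) = 1"
      and y: "y = (\<lambda>i\<in>{..<d}. map (\<lambda>k. \<Sum>i<length vs. t i * vs!i!k) [0..<d] ! i)" by blast
    show "y \<in> {restrict (\<lambda>j. \<Sum>k\<le>d. t k * vs!k!j) {..<d} | t. (\<forall>k\<le>d. 0 \<le> t k) \<and> (\<Sum>k\<le>d. t k) = 1}"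
      using t c[of t] unfolding y e by blast
  next
    fix y assume "y \<in> {restrict (\<lambda>j. \<Sum>k\<le>d. t k * vs!k!j) {..<d} | t. (\<forall>k\<le>d. 0 \<le> t k) \<and> (\<Sum>k\<le>d. t k) = 1}"
    then obtain t where t: "(\<forall>k\<le>d. 0 \<le> t k) \<and> (\<Sum>k\<le>d. t k) = 1"
      and y: "y = restrict (\<lambda>j. \<Sum>k\<le>d. t k * vs!k!j) {..<d}" by blast
    have "y = (\<lambda>xs. \<lambda>i\<in>{..<d}. xs!i) (map (\<lambda>k. \<Sum>i<length vs. t i * vs!i!k) [0..<d])"
      unfolding y e ..
    then show "y \<in> (\<lambda>xs. \<lambda>i\<in>{..<d}. xs!i) ` {map (\<lambda>k. \<Sum>i<length vs. t i * vs!i!k) [0..<d] | t. (\<forall>i<length vs. 0 \<le> t i) \<and> (\<Sum>i<length vs. t i) = 1}"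
      using t c[of t] by blast
  qed
qed

theorem proposition1:
  fixes d :: nat and p :: "nat \<Rightarrow> real" and pm :: "nat \<Rightarrow> nat \<Rightarrow> nat" and L :: "real list set"
  assumes "d \<ge> 1"
    and "\<forall>i\<in>{1..d}. p i \<noteq> 0"
    and "\<forall>i\<in>{2..d}. bij_betw (pm i) {..<i} {..<i}"
    and "L \<in> Tri p pm d"
  shows "meas d L = (\<Prod>i=1..d. \<bar>p i\<bar>)"
proof -
  obtain vs where vs: "vs \<in> Tv p pm d" and L: "L = lconv d vs" using assms(4) unfolding Tri_def by blast
  have g: "good p d vs" using main[OF assms(2,3) assms(1) order_refl vs] .
  then have len: "length vs = Suc d" unfolding good_def by blast
  have E: "emeasure (PM d) (shull d (\<lambda>k j. vs!k!j)) = ennreal (\<Prod>i=1..d. \<bar>p i\<bar>)"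
    using g unfolding good_def by blast
  have "meas d L = measure (PM d) (shull d (\<lambda>k j. vs!k!j))"
    unfolding meas_def L img[OF len] ..
  also have "\<dots> = (\<Prod>i=1..d. \<bar>p i\<bar>)"
    unfolding measure_def E by (simp add: prod_nonneg)
  finally show ?thesis .
qed


end
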